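(* Let $q$ be a prime power and $n,d$ integers with $n\ge 2d\ge 2$, and assume $(n,q)\neq(2d,2)$. Then for all $0\le i\le d$ and $0\le j\le d$, $$|T_{h_{\max}}(i,j)|-|T_{h_{\max}-1}(i,j)|\le |G_j(i)|\le |T_{h_{\max}}(i,j)|,$$ where $h_{\max}=h_{\max}(i,j)=\min\{i,d-j\}$.
   Context: For integers $m\ge 0$ and $l$, the Gaussian coefficient is ${m\brack l}=\prod_{t=1}^{l}\frac{q^{m-t+1}-1}{q^t-1}$ for $l\ge 0$ (this is $0$ if $l>m$) and ${m\brack l}=0$ for $l<0$. For $0\le i,j\le d$ define $$G_j(i)=\sum_{h=\max\{0,i-j\}}^{\min\{i,d-j\}}(-1)^{i-h}q^{j(j-i+h)+\binom{i-h}{2}}{i\brack h}{d-h\brack j}{n-d-i+h\brack n-d-j};$$ these are the eigenvalues of the Grassmann graph $G_q(n,d,j)$ (vertices: $d$-dimensional subspaces of $\mathbb F_q^n$, two adjacent iff their intersection has dimension $d-j$). For $\max\{0,i-j\}\le h\le \min\{i,d-j\}$, $T_h(i,j)$ denotes the $h$-th summand above; for all other integers $h$ (in particular $h=-1$) set $T_h(i,j)=0$. *)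

theory Defs
  imports Complex_Main "HOL-Computational_Algebra.Primes"
begin

definition gauss :: "real \<Rightarrow> int \<Rightarrow> int \<Rightarrow> real" where
  "gauss q m l = (if l < 0 then 0 else
     (\<Prod>t\<in>{1..l}. (q powi (m - t + 1) - 1) / (q powi t - 1)))"

definition Tsum :: "real \<Rightarrow> int \<Rightarrow> int \<Rightarrow> int \<Rightarrow> int \<Rightarrow> int \<Rightarrow> real" where
  "Tsum q n d i j h =
     (if max 0 (i - j) \<le> h \<and> h \<le> min i (d - j) then
        (-1) ^ nat (i - h) * q ^ nat (j * (j - i + h) + int (nat (i - h) choose 2))
        * gauss q i h * gauss q (d - h) j * gauss q (n - d - i + h) (n - d - j)
      else 0)"

text \<open>Eigenvalue G_j(i) of the Grassmann graph G_q(n,d,j).\<close>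
definition Geig :: "real \<Rightarrow> int \<Rightarrow> int \<Rightarrow> int \<Rightarrow> int \<Rightarrow> real" where
  "Geig q n d i j = (\<Sum>h\<in>{max 0 (i - j)..min i (d - j)}. Tsum q n d i j h)"

end

theory Submission
  imports Defs
begin


lemma powi_nat: "(k::int) \<ge> 0 \<Longrightarrow> (q::real) powi k = q ^ nat k"
  by (metis int_nat_eq power_int_of_nat)

lemma A_pos: assumes "(q::real) > 1" "k \<ge> (1::int)" shows "q powi k - 1 > 0"
proof -
  have "q ^ nat k > 1" using assms by (intro one_less_power) auto
  thus ?thesis using powi_nat[of k q] assms by simp
qed

lemma gauss_0[simp]: "gauss q m 0 = 1" by (simp add: gauss_def)

lemma gauss_succ: assumes "l \<ge> 0"
  shows "gauss q m (l+1) = gauss q m l * (q powi (m-l) - 1) / (q powi (l+1) - 1)"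
proof -
  have e: "{1..l+1} = insert (l+1) {1..l}" using assms by auto
  have "\<not> l < 0" "\<not> l + 1 < 0" using assms by auto
  then show ?thesis unfolding gauss_def e by (simp add: algebra_simps)
qed

lemma gauss_step_m: assumes "l \<ge> 0" "q > 1"
  shows "gauss q (m+1) l * (q powi (m+1-l) - 1) = gauss q m l * (q powi (m+1) - 1)"
  using assms(1)
proof (induction l rule: int_ge_induct)
  case base thus ?case by simp
next
  case (step l)
  have nz: "q powi (l+1) - 1 \<noteq> 0" using A_pos[OF assms(2), of "l+1"] step by simp
  have "gauss q (m+1) (l+1) * (q powi (m+1-(l+1)) - 1)
      = gauss q (m+1) l * (q powi (m+1-l) - 1) * (q powi (m-l) - 1) / (q powi (l+1) - 1)"
    using gauss_succ[OF step(1), of q "m+1"] by (simp add: algebra_simps)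
  also have "\<dots> = gauss q m l * (q powi (m+1) - 1) * (q powi (m-l) - 1) / (q powi (l+1) - 1)"
    using step(2) by simp
  also have "\<dots> = gauss q m (l+1) * (q powi (m+1) - 1)"
    using gauss_succ[OF step(1), of q m] by (simp add: algebra_simps)
  finally show ?case .
qed



lemma ineq:
  fixes q :: real and h a x y z e :: nat
  assumes q: "q \<ge> 2" and h: "h \<ge> 1" and a: "a \<ge> 1" and x: "x \<ge> 1" and y: "y \<ge> 1"
    and z: "z \<ge> h + (y + a - 1) + e" and e: "e = 1 \<or> q \<ge> 3"
  shows "(q^h-1)*(q^(x+y+a-1)-1)*(q^a-1) \<le> q^a*(q^x-1)*(q^y-1)*(q^z-1)"
proof -
  define s where "s = y + a - 1"
  have xs: "x+y+a-1 = x + s" using s_def y a by simp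
  have q1: "q \<ge> 1" using q by simp
  have Ah: "q^h - 1 \<ge> 0" using q1 by simp
  have Ax: "q^x - 1 \<ge> 0" using q1 by simp
  have Ay1: "q^y - 1 \<ge> 1"
  proof -
    have "q^y \<ge> q^1" using q y by (intro power_increasing) auto
    thus ?thesis using q by simp
  qed
  have qa: "q^a \<ge> 0" using q by simp
  have s1: "q^(s+e) \<ge> 0" using q by simp
  have st1: "q^z - 1 \<ge> (q^h-1) * q^(s+e)"
  proof -
    have "q^z \<ge> q^(h+s+e)" using q z s_def by (intro power_increasing) auto
    moreover have "q^(s+e) \<ge> 1" using q1 by simp
    ultimately show ?thesis by (simp add: algebra_simps power_add)
  qed
  have st2: "q^(s+e) * (q^x-1) * (q^y-1) \<ge> q^(x+s) - 1"
  proof (cases "e = 1")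
    case True
    have "q * (q^x - 1) \<ge> q^x"
    proof -
      have "q^x \<ge> q^1" using q x by (intro power_increasing) auto
      hence "q^x * (q - 1) \<ge> q * 1" using q by (intro mult_mono) auto
      thus ?thesis by (simp add: algebra_simps)
    qed
    hence "q^s * (q * (q^x - 1)) \<ge> q^s * q^x" using q by (intro mult_left_mono) auto
    hence "q^(s+e) * (q^x-1) \<ge> q^(x+s)" using True by (simp add: power_add algebra_simps)
    moreover have "q^(s+e) * (q^x-1) * (q^y-1) \<ge> q^(s+e) * (q^x-1) * 1"
      using Ay1 s1 Ax by (intro mult_left_mono) auto
    ultimately show ?thesis by simp
  next
    case False
    hence q3: "q \<ge> 3" using e by simp
    have Ay2: "q^y - 1 \<ge> 2"
    proof -
      have "q^y \<ge> q^1" using q y by (intro power_increasing) auto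
      thus ?thesis using q3 by simp
    qed
    have "2 * (q^x - 1) \<ge> q^x"
    proof -
      have "q^x \<ge> q^1" using q x by (intro power_increasing) auto
      thus ?thesis using q by simp
    qed
    hence "q^s * ((q^x - 1) * 2) \<ge> q^s * q^x" using q by (intro mult_left_mono) auto
    moreover have "q^(s+e) \<ge> q^s" using q1 by (intro power_increasing) auto
    moreover have "q^(s+e) * (q^x-1) * (q^y-1) \<ge> q^(s+e) * (q^x-1) * 2"
      using Ay2 s1 Ax by (intro mult_left_mono) auto
    moreover have "q^(s+e) * (q^x-1) * 2 \<ge> q^s * (q^x-1) * 2"
      using calculation(2) Ax by (intro mult_right_mono) auto
    ultimately show ?thesis by (simp add: power_add algebra_simps)
  qed
  have c1: "q^a*(q^x-1)*(q^y-1)*(q^z-1) \<ge> q^a*(q^x-1)*(q^y-1)*((q^h-1) * q^(s+e))"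
    using st1 qa Ax Ay1 by (intro mult_left_mono) auto
  have c2: "q^a*(q^x-1)*(q^y-1)*((q^h-1) * q^(s+e)) = q^a * (q^h-1) * (q^(s+e) * (q^x-1) * (q^y-1))"
    by (simp add: algebra_simps)
  have c3: "q^a * (q^h-1) * (q^(s+e) * (q^x-1) * (q^y-1)) \<ge> q^a * (q^h-1) * (q^(x+s) - 1)"
    using st2 qa Ah by (intro mult_left_mono) auto
  have c4: "q^a * (q^h-1) * (q^(x+s) - 1) \<ge> (q^a - 1) * (q^h-1) * (q^(x+s) - 1)"
  proof -
    have "q^(x+s) - 1 \<ge> 0" using q1 by simp
    thus ?thesis using Ah by (intro mult_right_mono) auto
  qed
  have "(q^a - 1) * (q^h-1) * (q^(x+s) - 1) \<le> q^a*(q^x-1)*(q^y-1)*(q^z-1)"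
    using c1 c2 c3 c4 by linarith
  thus ?thesis unfolding xs by (simp add: algebra_simps)
qed



lemma alt:
  fixes f :: "int \<Rightarrow> real"
  assumes "lo \<le> hi" and "\<And>h. lo < h \<Longrightarrow> h \<le> hi \<Longrightarrow> \<exists>c\<ge>1. f h = - c * f (h-1)"
  shows "\<exists>\<theta>. 0 \<le> \<theta> \<and> \<theta> \<le> 1 \<and> sum f {lo..hi} = \<theta> * f hi"
  using assms
proof (induction hi rule: int_ge_induct)
  case base thus ?case by (intro exI[of _ 1]) simp
next
  case (step k)
  obtain \<theta> where th: "0 \<le> \<theta>" "\<theta> \<le> 1" "sum f {lo..k} = \<theta> * f k"
    using step by force
  obtain c where c: "c \<ge> 1" "f (k+1) = - c * f k" using step(3)[of "k+1"] step(1) by auto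
  have e: "{lo..k+1} = insert (k+1) {lo..k}" using step(1) by auto
  have fk: "f k = - f (k+1) / c" using c by (simp add: field_simps)
  have "sum f {lo..k+1} = f (k+1) + \<theta> * f k" unfolding e using th by simp
  also have "\<dots> = (1 - \<theta>/c) * f (k+1)" unfolding fk using c by (simp add: field_simps)
  finally show ?case using th c
    by (intro exI[of _ "1 - \<theta>/c"]) (auto simp: field_simps)
qed



lemma aux: "(D::real) \<noteq> 0 \<Longrightarrow> t*D = -s*m \<Longrightarrow> t = -s*m/D" by (simp add: field_simps)

lemma key:
  fixes q :: real and n d i j h :: int
  assumes q: "q \<ge> 2" and nd: "n \<ge> 2*d" and i: "0 \<le> i" "i \<le> d" and j: "0 \<le> j" "j \<le> d"
    and ex: "n \<ge> 2*d+1 \<or> q \<ge> 3"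
    and h: "max 0 (i-j) < h" "h \<le> min i (d-j)"
  shows "\<exists>c\<ge>1. Tsum q n d i j h = - c * Tsum q n d i j (h-1)"
proof -
  define A where "A k = q powi k - 1" for k
  define a where "a = j - i + h"
  define x where "x = i - h + 1"
  define y where "y = d - h + 1 - j"
  define z where "z = n - d - i + h"
  define k where "k = n - d - j"
  have q1: "q > 1" using q by simp
  have ge: "h \<ge> 1" "a \<ge> 1" "x \<ge> 1" "y \<ge> 1" "z \<ge> 1" "d-h+1 \<ge> 1" "k \<ge> 0"
    using h nd i j unfolding a_def x_def y_def z_def k_def by auto
  have Apos: "\<And>t. t \<ge> 1 \<Longrightarrow> A t > 0" unfolding A_def using A_pos[OF q1] by auto
  have g1: "gauss q i h = gauss q i (h-1) * A x / A h"
  proof -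
    have ee: "i - (h-1) = x" "h - 1 + 1 = h" unfolding x_def by simp_all
    have "gauss q i (h-1+1) = gauss q i (h-1) * (q powi (i-(h-1)) - 1)/(q powi (h-1+1) - 1)"
      by (rule gauss_succ) (use ge in auto)
    thus ?thesis unfolding ee A_def .
  qed
  have g2: "gauss q (d-h+1) j * A y = gauss q (d-h) j * A (d-h+1)"
    using gauss_step_m[of j q "d-h"] j q1 unfolding A_def y_def by (simp add: algebra_simps)
  have g3: "gauss q z k * A a = gauss q (z-1) k * A z"
    using gauss_step_m[of k q "z-1"] ge q1 unfolding A_def a_def z_def k_def by (simp add: algebra_simps)
  define u where "u = nat (i-h)"
  have iu: "nat (i-(h-1)) = Suc u" using h unfolding u_def by auto
  have ch: "Suc u choose 2 = (u choose 2) + u" by (simp add: numeral_2_eq_2)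
  define E1 where "E1 = j * (j - i + (h-1)) + int (Suc u choose 2)"
  define E0 where "E0 = j * (j - i + h) + int (u choose 2)"
  have E1nn: "E1 \<ge> 0" using h j unfolding E1_def by auto
  have iu2: "int u = i - h" unfolding u_def using h by simp
  have Erel: "E0 = E1 + a" unfolding E0_def E1_def a_def using ch iu2
    by (simp add: algebra_simps)
  have pw: "q ^ nat E0 = q ^ nat E1 * q ^ nat a"
    using Erel E1nn ge by (simp add: nat_add_distrib power_add)
  have sg: "(-1::real) ^ nat (i-(h-1)) = - ((-1) ^ u)" unfolding iu by simp
  define s where "s = (-1::real) ^ u"
  have T0: "Tsum q n d i j h = s * q ^ nat E0 * gauss q i h * gauss q (d-h) j * gauss q z k"
    unfolding Tsum_def s_def E0_def u_def z_def k_def using h by auto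
  have T1: "Tsum q n d i j (h-1) = - s * q ^ nat E1 * gauss q i (h-1) * gauss q (d-h+1) j * gauss q (z-1) k"
  proof -
    have r: "max 0 (i-j) \<le> h-1 \<and> h-1 \<le> min i (d-j)" using h by auto
    have "Tsum q n d i j (h-1) = (-1) ^ nat (i-(h-1)) * q ^ nat E1 * gauss q i (h-1)
        * gauss q (d-(h-1)) j * gauss q (n-d-i+(h-1)) (n-d-j)"
      unfolding Tsum_def E1_def iu[symmetric] using r by simp
    also have "\<dots> = - s * q ^ nat E1 * gauss q i (h-1) * gauss q (d-h+1) j * gauss q (z-1) k"
      unfolding sg s_def z_def k_def by (simp add: algebra_simps)
    finally show ?thesis .
  qed
  define c where "c = q ^ nat a * A x * A y * A z / (A h * A (d-h+1) * A a)"
  have D: "A h * A (d-h+1) * A a > 0" using Apos ge by simp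
  have "Tsum q n d i j h * (A h * A (d-h+1) * A a)
      = s * q ^ nat E1 * q ^ nat a * (gauss q i h * A h) * (gauss q (d-h) j * A (d-h+1)) * (gauss q z k * A a)"
    unfolding T0 pw by (simp add: algebra_simps)
  also have "\<dots> = s * q ^ nat E1 * q ^ nat a * (gauss q i (h-1) * A x) * (gauss q (d-h+1) j * A y) * (gauss q (z-1) k * A z)"
    unfolding g2[symmetric] g3 using g1 Apos[OF ge(1)] by simp
  also have "\<dots> = - Tsum q n d i j (h-1) * (q ^ nat a * A x * A y * A z)"
    unfolding T1 by (simp add: algebra_simps)
  finally have eq: "Tsum q n d i j h * (A h * A (d-h+1) * A a) = - Tsum q n d i j (h-1) * (q ^ nat a * A x * A y * A z)" .
  have "Tsum q n d i j h = - Tsum q n d i j (h-1) * (q ^ nat a * A x * A y * A z) / (A h * A (d-h+1) * A a)"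
    by (rule aux[OF _ eq]) (use D in linarith)
  hence "Tsum q n d i j h = - c * Tsum q n d i j (h-1)"
    unfolding c_def by simp
  moreover have "c \<ge> 1"
  proof -
    define e :: nat where "e = (if n \<ge> 2*d+1 then 1 else 0)"
    have An: "\<And>t. t \<ge> 0 \<Longrightarrow> A t = q ^ nat t - 1" unfolding A_def using powi_nat by simp
    have zz: "nat z \<ge> nat h + (nat y + nat a - 1) + e"
      using ge nd i unfolding e_def z_def y_def a_def by auto
    have xx: "nat x + nat y + nat a - 1 = nat (d-h+1)"
      using ge unfolding x_def y_def a_def by auto
    have "(q^nat h-1)*(q^(nat x+nat y+nat a-1)-1)*(q^nat a-1) \<le> q^nat a*(q^nat x-1)*(q^nat y-1)*(q^nat z-1)"
      by (rule ineq[OF q _ _ _ _ zz]) (use ge ex e_def in auto)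
    note IN = this
    have "A h * A (d-h+1) * A a \<le> q ^ nat a * A x * A y * A z"
    proof -
      have "A h = q^nat h - 1" "A (d-h+1) = q^nat (d-h+1) - 1" "A a = q^nat a - 1"
        "A x = q^nat x - 1" "A y = q^nat y - 1" "A z = q^nat z - 1" using An ge by auto
      thus ?thesis using IN unfolding xx by simp
    qed
    thus ?thesis unfolding c_def using D by simp
  qed
  ultimately show ?thesis by blast
qed


theorem lemma3p1:
  fixes q :: nat and n d i j :: int
  assumes "\<exists>p k. prime p \<and> k \<ge> 1 \<and> q = p ^ k"
    and "n \<ge> 2 * d" and "2 * d \<ge> 2"
    and "(n, q) \<noteq> (2 * d, 2)"
    and "0 \<le> i" and "i \<le> d" and "0 \<le> j" and "j \<le> d"
  shows "\<bar>Tsum (real q) n d i j (min i (d - j))\<bar> - \<bar>Tsum (real q) n d i j (min i (d - j) - 1)\<bar>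
           \<le> \<bar>Geig (real q) n d i j\<bar>
       \<and> \<bar>Geig (real q) n d i j\<bar> \<le> \<bar>Tsum (real q) n d i j (min i (d - j))\<bar>"
proof -
  obtain p k where pk: "prime p" "k \<ge> 1" "q = p ^ k" using assms(1) by blast
  have "p \<ge> 2" using pk(1) prime_ge_2_nat by blast
  hence "p ^ k \<ge> 2 ^ 1" using pk(2) by (meson order.trans one_le_numeral power_increasing power_mono zero_le_numeral)
  hence q2n: "q \<ge> 2" using pk by simp
  hence q2: "real q \<ge> 2" by simp
  have ex: "n \<ge> 2*d+1 \<or> real q \<ge> 3"
  proof (cases "n = 2*d")
    case True
    hence "q \<noteq> 2" using assms(4) by auto
    hence "q \<ge> 3" using q2n by simp
    thus ?thesis by simp
  next
    case False thus ?thesis using assms(2) by simp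
  qed
  define f where "f = Tsum (real q) n d i j"
  define lo where "lo = max 0 (i-j)"
  define hm where "hm = min i (d-j)"
  have lohm: "lo \<le> hm" unfolding lo_def hm_def using assms by auto
  have step: "\<And>h. lo < h \<Longrightarrow> h \<le> hm \<Longrightarrow> \<exists>c\<ge>1. f h = - c * f (h-1)"
    unfolding f_def lo_def hm_def by (rule key[OF q2 assms(2) assms(5,6,7,8) ex]) auto
  have G: "Geig (real q) n d i j = sum f {lo..hm}" unfolding Geig_def f_def lo_def hm_def ..
  obtain \<theta> where th: "0 \<le> \<theta>" "\<theta> \<le> 1" "sum f {lo..hm} = \<theta> * f hm"
    using alt[of lo hm f, OF lohm step] by blast
  have up: "\<bar>sum f {lo..hm}\<bar> \<le> \<bar>f hm\<bar>"
    unfolding th(3) abs_mult using th(1,2) by (simp add: mult_left_le_one_le)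
  have low: "\<bar>f hm\<bar> - \<bar>f (hm-1)\<bar> \<le> \<bar>sum f {lo..hm}\<bar>"
  proof (cases "lo = hm")
    case True
    have "f (hm - 1) = 0" unfolding f_def Tsum_def using True unfolding lo_def hm_def by auto
    thus ?thesis using True by simp
  next
    case False
    hence lt: "lo \<le> hm - 1" using lohm by simp
    obtain \<theta>' where th': "0 \<le> \<theta>'" "\<theta>' \<le> 1" "sum f {lo..hm-1} = \<theta>' * f (hm-1)"
      using alt[of lo "hm-1" f, OF lt] step by force
    have e: "{lo..hm} = insert hm {lo..hm-1}" using lohm by auto
    have s: "sum f {lo..hm} = f hm + \<theta>' * f (hm-1)" unfolding e th'(3)[symmetric] by simp
    have "\<bar>\<theta>' * f (hm-1)\<bar> \<le> \<bar>f (hm-1)\<bar>"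
      unfolding abs_mult using th'(1,2) by (simp add: mult_left_le_one_le)
    thus ?thesis unfolding s by linarith
  qed
  show ?thesis using up low unfolding G f_def hm_def by simp
qed

end
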